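(* Let $n\ge 2$ and $m=n-1$, let $\lambda_1,\dots,\lambda_n>0$, and let $X_1,\dots,X_n$ be independent random variables with $X_i\sim\mathrm{Poisson}(\lambda_i)$. Let $\mathbf A\in\mathrm{Mat}_{m\times n}(\mathbb{N})$ (where $\mathbb{N}=\mathbb{Z}_{\ge 0}$), and define $(Y_1,\dots,Y_m)^T=\mathbf A(X_1,\dots,X_n)^T$ and $F_{\mathbf Y}(b_1,\dots,b_m)=\mathbb{P}(Y_1=b_1,\dots,Y_m=b_m)$, so that \[ F_{\mathbf Y}(b)=\sum_{\substack{k\in\mathbb{N}^n\\ \mathbf A k=b}}\frac{\lambda_1^{k_1}}{k_1!}\cdots\frac{\lambda_n^{k_n}}{k_n!}\,e^{-(\lambda_1+\dots+\lambda_n)} . \] Suppose $\mathbf A$ has rank $r=m=n-1$ and all of its elementary divisors $d_1,\dots,d_r$ equal $\pm1$. Then $F_{\mathbf Y}$ can be written as a sum over a single index: there exist an integer matrix $\mathbf M\in\mathrm{Mat}_{n\times m}(\mathbb{Z})$ and an integer vector $v\in\mathbb{Z}^n$ such that for every $b\in\mathbb{N}^m$, writing $k(j)=\mathbf M b+j v$, \[ F_{\mathbf Y}(b)=\sum_{\substack{j\in\mathbb{Z}\\ k(j)\in\mathbb{N}^n}}\frac{\lambda_1^{k_1(j)}}{k_1(j)!}\cdots\frac{\lambda_n^{k_n(j)}}{k_n(j)!}\,e^{-(\lambda_1+\dots+\lambda_n)} . \]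
   Context: Elementary divisors: every $\mathbf A\in\mathrm{Mat}_{m\times n}(\mathbb{Z})$ of rank $r$ has a Smith normal form, i.e. there are matrices $\mathbf P\in\mathrm{Mat}_{m\times m}(\mathbb{Z})$, $\mathbf Q\in\mathrm{Mat}_{n\times n}(\mathbb{Z})$ invertible over $\mathbb{Z}$ such that $\mathbf{PAQ}$ is the $m\times n$ matrix with diagonal entries $d_1,\dots,d_r,0,\dots,0$ and zeros elsewhere, with $d_i\ne0$ and $d_1\mid d_2\mid\cdots\mid d_r$; the $d_i$ are unique up to sign and are called the elementary divisors of $\mathbf A$. Equivalently $d_i=\pm\Delta_i/\Delta_{i-1}$ where $\Delta_i$ is the gcd of the $i\times i$ minors of $\mathbf A$ ($\Delta_0=1$). *)

theory Defs
  imports "HOL-Analysis.Analysis" "Jordan_Normal_Form.Matrix"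
begin

definition smith_normal_form :: "int mat \<Rightarrow> int mat \<Rightarrow> int mat \<Rightarrow> (nat \<Rightarrow> int) \<Rightarrow> nat \<Rightarrow> bool" where
  "smith_normal_form A P Q d r \<longleftrightarrow>
     (let m = dim_row A; n = dim_col A in
        P \<in> carrier_mat m m \<and> Q \<in> carrier_mat n n \<and>
        invertible_mat P \<and> invertible_mat Q \<and> r \<le> min m n \<and>
        P * A * Q = mat m n (\<lambda>(i, j). if i = j \<and> i < r then d i else 0) \<and>
        (\<forall>i<r. d i \<noteq> 0) \<and> (\<forall>i. Suc i < r \<longrightarrow> d i dvd d (Suc i)))"

text \<open>The Poisson weight of a vector k in N^n (entries assumed nonnegative).\<close>
definition poisson_weight :: "nat \<Rightarrow> (nat \<Rightarrow> real) \<Rightarrow> int vec \<Rightarrow> real" where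
  "poisson_weight n lam k =
     (\<Prod>i<n. lam i ^ nat (k $ i) / fact (nat (k $ i))) * exp (- (\<Sum>i<n. lam i))"

definition F_Y :: "int mat \<Rightarrow> (nat \<Rightarrow> real) \<Rightarrow> int vec \<Rightarrow> real" where
  "F_Y A lam b = infsum (poisson_weight (dim_col A) lam)
      {k. k \<in> carrier_vec (dim_col A) \<and> (\<forall>i<dim_col A. 0 \<le> k $ i) \<and> A *\<^sub>v k = b}"

end

theory Submission
  imports Defs
begin

lemma smult_mat_vec_int:
  fixes A :: "int mat"
  assumes "A \<in> carrier_mat nr nc" "v \<in> carrier_vec nc"
  shows "A *\<^sub>v (k \<cdot>\<^sub>v v) = k \<cdot>\<^sub>v (A *\<^sub>v v)"
  using assms by (intro eq_vecI) (auto simp: scalar_prod_smult_distrib[of _ nc])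

lemma diag_mult_vec:
  fixes d :: "nat \<Rightarrow> int"
  assumes "y \<in> carrier_vec n" "m \<le> n"
  shows "mat m n (\<lambda>(i, j). if i = j \<and> i < m then d i else 0) *\<^sub>v y = vec m (\<lambda>i. d i * y $ i)"
proof (rule eq_vecI)
  fix i assume "i < dim_vec (vec m (\<lambda>i. d i * y $ i))"
  hence i: "i < m" by simp
  have "(\<Sum>j\<in>{0..<n}. (if i = j \<and> i < m then d i else 0) * y $ j) = (\<Sum>j\<in>{0..<n}. if j = i then d i * y $ j else 0)"
    using i by (intro sum.cong) auto
  also have "\<dots> = d i * y $ i" using i assms by simp
  finally show "(mat m n (\<lambda>(i, j). if i = j \<and> i < m then d i else 0) *\<^sub>v y) $ i = vec m (\<lambda>i. d i * y $ i) $ i"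
    using i assms by (simp add: scalar_prod_def)
qed simp

lemma diag'_mult_vec:
  fixes d :: "nat \<Rightarrow> int"
  assumes "w \<in> carrier_vec m" "m \<le> n"
  shows "mat n m (\<lambda>(i, j). if i = j \<and> i < m then d i else 0) *\<^sub>v w = vec n (\<lambda>i. if i < m then d i * w $ i else 0)"
proof (rule eq_vecI)
  fix i assume "i < dim_vec (vec n (\<lambda>i. if i < m then d i * w $ i else 0))"
  hence i: "i < n" by simp
  have "(\<Sum>j\<in>{0..<m}. (if i = j \<and> i < m then d i else 0) * w $ j) = (\<Sum>j\<in>{0..<m}. if j = i then d i * w $ j else 0)"
    using i by (intro sum.cong) auto
  also have "\<dots> = (if i < m then d i * w $ i else 0)" using i assms by simp
  finally show "(mat n m (\<lambda>(i, j). if i = j \<and> i < m then d i else 0) *\<^sub>v w) $ i = vec n (\<lambda>i. if i < m then d i * w $ i else 0) $ i"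
    using i assms by (simp add: scalar_prod_def)
qed simp

theorem mainTheorem1:
  fixes n m :: nat and lam :: "nat \<Rightarrow> real" and A :: "int mat"
  assumes "n \<ge> 2" and "m = n - 1"
    and "\<forall>i<n. lam i > 0"
    and "A \<in> carrier_mat m n" and "\<forall>i<m. \<forall>j<n. 0 \<le> A $$ (i, j)"
    and "\<exists>P Q d. smith_normal_form A P Q d m \<and> (\<forall>i<m. d i = 1 \<or> d i = -1)"
  shows "\<exists>M v. M \<in> carrier_mat n m \<and> v \<in> carrier_vec n \<and>
    (\<forall>b. b \<in> carrier_vec m \<and> (\<forall>i<m. 0 \<le> b $ i) \<longrightarrow>
       F_Y A lam b =
         infsum (\<lambda>j::int. poisson_weight n lam (M *\<^sub>v b + of_int j \<cdot>\<^sub>v v))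
           {j. \<forall>i<n. 0 \<le> (M *\<^sub>v b + of_int j \<cdot>\<^sub>v v) $ i})"
proof -
  obtain P Q d where snf: "smith_normal_form A P Q d m" and dd: "\<forall>i<m. d i = 1 \<or> d i = -1"
    using assms(6) by blast
  have A: "A \<in> carrier_mat m n" by fact
  have mn: "m < n" "m \<le> n" using assms(1,2) by auto
  define D where "D = mat m n (\<lambda>(i, j). if i = j \<and> i < m then d i else (0::int))"
  define D' where "D' = mat n m (\<lambda>(i, j). if i = j \<and> i < m then d i else (0::int))"
  have P: "P \<in> carrier_mat m m" and Q: "Q \<in> carrier_mat n n" and iP: "invertible_mat P"
    and iQ: "invertible_mat Q" and PAQ: "P * A * Q = D"
    using snf A unfolding smith_normal_form_def D_def Let_def by auto
  obtain Pi where Pi1: "P * Pi = 1\<^sub>m m" and Pi2: "Pi * P = 1\<^sub>m (dim_row Pi)"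
    using iP P unfolding invertible_mat_def inverts_mat_def by auto
  have Pi: "Pi \<in> carrier_mat m m"
  proof -
    have c: "dim_col Pi = m" using arg_cong[OF Pi1, of dim_col] by simp
    have "dim_col (Pi * P) = dim_row Pi" using Pi2 by simp
    thus ?thesis using c P by auto
  qed
  obtain Qi where Qi1: "Q * Qi = 1\<^sub>m n" and Qi2: "Qi * Q = 1\<^sub>m (dim_row Qi)"
    using iQ Q unfolding invertible_mat_def inverts_mat_def by auto
  have Qi: "Qi \<in> carrier_mat n n"
  proof -
    have c: "dim_col Qi = n" using arg_cong[OF Qi1, of dim_col] by simp
    have "dim_col (Qi * Q) = dim_row Qi" using Qi2 by simp
    thus ?thesis using c Q by auto
  qed
  have Qi2': "Qi * Q = 1\<^sub>m n" using Qi2 Qi by simp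
  have Pi2': "Pi * P = 1\<^sub>m m" using Pi2 Pi by simp
  have D: "D \<in> carrier_mat m n" unfolding D_def by simp
  have D': "D' \<in> carrier_mat n m" unfolding D'_def by simp
  have AQ: "A * Q = Pi * D"
  proof -
    have "Pi * D = Pi * (P * A * Q)" using PAQ by simp
    also have "\<dots> = (Pi * P) * A * Q" 
    proof -
      have "Pi * (P * A * Q) = Pi * (P * A) * Q"
        using assoc_mult_mat[of Pi m m "P * A" n Q n, symmetric] Pi P A Q by auto
      also have "Pi * (P * A) = (Pi * P) * A"
        using assoc_mult_mat[of Pi m m P m A n, symmetric] Pi P A by auto
      finally show ?thesis .
    qed
    also have "\<dots> = A * Q" using Pi2' A by simp
    finally show ?thesis by simp
  qed
  define M where "M = Q * (D' * P)"
  define v where "v = Q *\<^sub>v unit_vec n m"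
  have M: "M \<in> carrier_mat n m" unfolding M_def using Q D' P by auto
  have v: "v \<in> carrier_vec n" unfolding v_def using Q by auto
  show ?thesis
  proof (intro exI conjI allI impI, rule M, rule v)
    fix b :: "int vec" assume bb: "b \<in> carrier_vec m \<and> (\<forall>i<m. 0 \<le> b $ i)"
    hence b: "b \<in> carrier_vec m" by simp
    define w where "w = P *\<^sub>v b"
    have w: "w \<in> carrier_vec m" unfolding w_def using P b by simp
    define z where "z = (\<lambda>j::int. vec n (\<lambda>i. if i < m then d i * w $ i else j))"
    have z: "z j \<in> carrier_vec n" for j unfolding z_def by simp
    have key: "M *\<^sub>v b + of_int j \<cdot>\<^sub>v v = Q *\<^sub>v z j" for j
    proof -
      have "M *\<^sub>v b = Q *\<^sub>v (D' *\<^sub>v w)" unfolding M_def w_def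
        using assoc_mult_mat_vec[of Q n n "D' * P" m b] assoc_mult_mat_vec[of D' n m P m b] Q D' P b by auto
      also have "D' *\<^sub>v w = vec n (\<lambda>i. if i < m then d i * w $ i else 0)"
        unfolding D'_def using diag'_mult_vec[OF w mn(2)] .
      finally have 1: "M *\<^sub>v b = Q *\<^sub>v vec n (\<lambda>i. if i < m then d i * w $ i else 0)" .
      have 2: "of_int j \<cdot>\<^sub>v v = Q *\<^sub>v (j \<cdot>\<^sub>v unit_vec n m)"
        unfolding v_def using smult_mat_vec_int[OF Q, of "unit_vec n m" j] by simp
      have 3: "z j = vec n (\<lambda>i. if i < m then d i * w $ i else 0) + j \<cdot>\<^sub>v unit_vec n m"
        unfolding z_def using mn assms(2) by (intro eq_vecI) auto
      show ?thesis unfolding 1 2 3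
        by (rule mult_add_distrib_mat_vec[OF Q, symmetric]) auto
    qed
    define S where "S = {k. k \<in> carrier_vec (dim_col A) \<and> (\<forall>i<dim_col A. 0 \<le> k $ i) \<and> A *\<^sub>v k = b}"
    define J where "J = {j::int. \<forall>i<n. 0 \<le> (M *\<^sub>v b + of_int j \<cdot>\<^sub>v v) $ i}"
    have Dz: "D *\<^sub>v z j = w" for j
    proof -
      have "D *\<^sub>v z j = vec m (\<lambda>i. d i * z j $ i)" unfolding D_def by (rule diag_mult_vec[OF z mn(2)])
      also have "\<dots> = w" using w mn dd by (intro eq_vecI) (auto simp: z_def)
      finally show ?thesis .
    qed
    have Az: "A *\<^sub>v (Q *\<^sub>v z j) = b" for j
    proof -
      have "A *\<^sub>v (Q *\<^sub>v z j) = (A * Q) *\<^sub>v z j" using A Q z by simp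
      also have "\<dots> = Pi *\<^sub>v (D *\<^sub>v z j)" unfolding AQ using Pi D z by simp
      also have "\<dots> = (Pi * P) *\<^sub>v b" unfolding Dz w_def using Pi P b by simp
      also have "\<dots> = b" using Pi2' b by simp
      finally show ?thesis .
    qed
    have img: "S = (\<lambda>j. Q *\<^sub>v z j) ` J"
    proof
      show "(\<lambda>j. Q *\<^sub>v z j) ` J \<subseteq> S"
        unfolding S_def J_def key using A Q z Az by auto
    next
      show "S \<subseteq> (\<lambda>j. Q *\<^sub>v z j) ` J"
      proof
        fix k assume "k \<in> S"
        hence k: "k \<in> carrier_vec n" and kpos: "\<forall>i<n. 0 \<le> k $ i" and Ak: "A *\<^sub>v k = b"
          unfolding S_def using A by auto
        define y where "y = Qi *\<^sub>v k"
        have y: "y \<in> carrier_vec n" unfolding y_def using Qi k by simp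
        have kQy: "k = Q *\<^sub>v y" unfolding y_def using Q Qi k Qi1
          by (simp add: assoc_mult_mat_vec[symmetric, of Q n n Qi n k])
        have "b = A *\<^sub>v (Q *\<^sub>v y)" using Ak kQy by simp
        also have "\<dots> = Pi *\<^sub>v (D *\<^sub>v y)" using A Q y Pi D
          by (simp add: assoc_mult_mat_vec[symmetric, of A m n Q n y] AQ)
        finally have "P *\<^sub>v b = (P * Pi) *\<^sub>v (D *\<^sub>v y)" using P Pi D y by simp
        hence Dy: "D *\<^sub>v y = w" unfolding w_def Pi1 using D y by simp
        have "y = z (y $ m)"
        proof (rule eq_vecI)
          fix i assume "i < dim_vec (z (y $ m))"
          hence i: "i < n" by (simp add: z_def)
          show "y $ i = z (y $ m) $ i"
          proof (cases "i < m")
            case True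
            have "w $ i = d i * y $ i" using arg_cong[OF Dy, of "\<lambda>x. x $ i"] True
              unfolding D_def diag_mult_vec[OF y mn(2)] by simp
            hence "d i * w $ i = y $ i" using dd True by auto
            thus ?thesis using i True by (simp add: z_def)
          next
            case False
            hence "i = m" using i assms(2) by auto
            thus ?thesis using i by (simp add: z_def)
          qed
        qed (use y in \<open>simp add: z_def\<close>)
        hence "k = Q *\<^sub>v z (y $ m)" using kQy by simp
        moreover have "y $ m \<in> J" unfolding J_def key using kpos \<open>k = Q *\<^sub>v z (y $ m)\<close> by simp
        ultimately show "k \<in> (\<lambda>j. Q *\<^sub>v z j) ` J" by blast
      qed
    qed
    have inj: "inj_on (\<lambda>j. Q *\<^sub>v z j) J"
    proof
      fix j1 j2 assume "Q *\<^sub>v z j1 = Q *\<^sub>v z j2"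
      hence "Qi *\<^sub>v (Q *\<^sub>v z j1) = Qi *\<^sub>v (Q *\<^sub>v z j2)" by simp
      hence "z j1 = z j2" using Qi Q z Qi2'
        by (simp add: assoc_mult_mat_vec[symmetric, of Qi n n Q])
      hence "z j1 $ m = z j2 $ m" by simp
      thus "j1 = j2" using mn by (simp add: z_def)
    qed
    have "F_Y A lam b = infsum (poisson_weight n lam) S"
      unfolding F_Y_def S_def using A by simp
    also have "\<dots> = infsum (poisson_weight n lam \<circ> (\<lambda>j. Q *\<^sub>v z j)) J"
      unfolding img by (rule infsum_reindex[OF inj])
    also have "\<dots> = infsum (\<lambda>j::int. poisson_weight n lam (M *\<^sub>v b + of_int j \<cdot>\<^sub>v v)) J"
      unfolding key o_def ..
    finally show "F_Y A lam b = infsum (\<lambda>j::int. poisson_weight n lam (M *\<^sub>v b + of_int j \<cdot>\<^sub>v v))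
           {j. \<forall>i<n. 0 \<le> (M *\<^sub>v b + of_int j \<cdot>\<^sub>v v) $ i}" unfolding J_def .
  qed
qed

end
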